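(* For every $n\ge0$, there is a bijection between the set of linked cycles on $[n+1]$ and the set $P_2(n)$ of all set partitions of $[k]$, for some $0\le k\le 2n$, into exactly $n$ blocks each having at most $2$ elements.
   Context: Two finite sets of integers $E,F$ are nearly disjoint if for every $i\in E\cap F$ either ($i=\min(E)$, $|E|>1$, $i\ne\min(F)$) or ($i=\min(F)$, $|F|>1$, $i\ne\min(E)$). A linked partition of $[m]$ is a set of nonempty subsets (blocks) of $[m]$ with union $[m]$, any two distinct blocks nearly disjoint. A linked cycle on $[m]$ is a linked partition of $[m]$ together with a cyclic arrangement of the elements of each block. *)

theory Defs
  imports Main "HOL-Library.Disjoint_Sets" "HOL-Combinatorics.Permutations"
begin

definition nearly_disjoint :: "nat set \<Rightarrow> nat set \<Rightarrow> bool" where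
  "nearly_disjoint E F \<longleftrightarrow>
     (\<forall>i \<in> E \<inter> F.
        (i = Min E \<and> card E > 1 \<and> i \<noteq> Min F) \<or>
        (i = Min F \<and> card F > 1 \<and> i \<noteq> Min E))"

definition linked_partition :: "nat \<Rightarrow> nat set set \<Rightarrow> bool" where
  "linked_partition m P \<longleftrightarrow>
     (\<forall>B \<in> P. B \<noteq> {} \<and> B \<subseteq> {1..m}) \<and> \<Union>P = {1..m} \<and>
     (\<forall>E \<in> P. \<forall>F \<in> P. E \<noteq> F \<longrightarrow> nearly_disjoint E F)"

text \<open>A cyclic arrangement of the elements of a finite set B, represented as a
  cyclic permutation of B: a permutation of B (fixing everything outside B)
  with a single orbit on B.\<close>
definition cyclic_arrangement :: "nat set \<Rightarrow> (nat \<Rightarrow> nat) \<Rightarrow> bool" where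
  "cyclic_arrangement B \<sigma> \<longleftrightarrow>
     \<sigma> permutes B \<and> (\<forall>x \<in> B. \<forall>y \<in> B. \<exists>k::nat. (\<sigma> ^^ k) x = y)"

text \<open>A linked cycle on [m]: a linked partition together with a cyclic arrangement
  of each block, represented as a set of pairs (block, arrangement), one per block.\<close>
definition linked_cycle :: "nat \<Rightarrow> (nat set \<times> (nat \<Rightarrow> nat)) set \<Rightarrow> bool" where
  "linked_cycle m L \<longleftrightarrow>
     linked_partition m (fst ` L) \<and> inj_on fst L \<and>
     (\<forall>(B, \<sigma>) \<in> L. cyclic_arrangement B \<sigma>)"

definition linked_cycles :: "nat \<Rightarrow> (nat set \<times> (nat \<Rightarrow> nat)) set set" where
  "linked_cycles m = {L. linked_cycle m L}"

definition P2 :: "nat \<Rightarrow> nat set set set" where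
  "P2 n = {P. \<exists>k \<le> 2 * n. partition_on {1..k} P \<and> card P = n \<and> (\<forall>B \<in> P. card B \<le> 2)}"

end

theory Submission
  imports Defs
begin

lemma funpow_in: "\<sigma> permutes B \<Longrightarrow> x \<in> B \<Longrightarrow> (\<sigma> ^^ k) x \<in> B"
  by (induction k) (auto simp: permutes_in_image)

lemma cyc_sing: "cyclic_arrangement {N} \<sigma> \<longleftrightarrow> \<sigma> = id"
  by (auto simp: cyclic_arrangement_def intro: exI[of _ 0])

lemma funpow_fix: "\<sigma> x = x \<Longrightarrow> (\<sigma> ^^ k) x = x"
  by (induction k) auto

lemma cyc_moves:
  assumes "cyclic_arrangement B \<sigma>" "x \<in> B" "y \<in> B" "y \<noteq> x"
  shows "\<sigma> x \<noteq> x"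
proof
  assume "\<sigma> x = x"
  obtain k where "(\<sigma> ^^ k) x = y" using assms by (auto simp: cyclic_arrangement_def)
  with funpow_fix[of \<sigma> x k, OF \<open>\<sigma> x = x\<close>] assms(4) show False by simp
qed

lemma cyc_pair:
  assumes "i \<noteq> N"
  shows "cyclic_arrangement {i, N} (transpose i N)"
proof -
  have "transpose i N permutes {i, N}" by (rule permutes_swap_id) auto
  moreover have "\<exists>k. (transpose i N ^^ k) x = y" if "x \<in> {i,N}" "y \<in> {i,N}" for x y
  proof (cases "x = y")
    case True then show ?thesis by (intro exI[of _ 0]) simp
  next
    case False
    then show ?thesis using that by (intro exI[of _ 1]) auto
  qed
  ultimately show ?thesis by (simp add: cyclic_arrangement_def)
qed

lemma cyc_pair_unique:
  assumes "i \<noteq> N" "cyclic_arrangement {i, N} \<sigma>"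
  shows "\<sigma> = transpose i N"
proof -
  have p: "\<sigma> permutes {i, N}" using assms by (simp add: cyclic_arrangement_def)
  have "\<sigma> i \<noteq> i" using cyc_moves[OF assms(2), of i N] assms(1) by auto
  moreover have "\<sigma> i \<in> {i, N}" using permutes_in_image[OF p, of i] by simp
  ultimately have si: "\<sigma> i = N" by auto
  have "\<sigma> N \<noteq> N" using cyc_moves[OF assms(2), of N i] assms(1) by auto
  moreover have "\<sigma> N \<in> {i, N}" using permutes_in_image[OF p, of N] by simp
  ultimately have sN: "\<sigma> N = i" by auto
  show ?thesis
  proof
    fix x show "\<sigma> x = transpose i N x"
      using si sN permutes_not_in[OF p, of x] by (cases "x = i"; cases "x = N") auto
  qed
qed

lemma cyc_insert:
  assumes c: "cyclic_arrangement B \<tau>" and a: "a \<in> B" and N: "N \<notin> B"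
  shows "cyclic_arrangement (insert N B) (\<tau> \<circ> transpose a N)"
proof -
  define s where "s = \<tau> \<circ> transpose a N"
  have p: "\<tau> permutes B" using c by (simp add: cyclic_arrangement_def)
  have perm: "s permutes insert N B" unfolding s_def
    by (rule permutes_compose) (auto intro: permutes_swap_id permutes_subset[OF p] simp: a)
  have aN: "a \<noteq> N" using a N by auto
  have s_a: "s a = N" using permutes_not_in[OF p N] by (simp add: s_def)
  have s_N: "s N = \<tau> a" by (simp add: s_def)
  have s_z: "s z = \<tau> z" if "z \<noteq> a" "z \<noteq> N" for z using that by (simp add: s_def)
  have claim: "\<exists>k'. (s ^^ k') x = (\<tau> ^^ k) x" if "x \<in> B" for x k
  proof (induction k)
    case 0 then show ?case by (intro exI[of _ 0]) simp
  next
    case (Suc k)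
    then obtain k' where k': "(s ^^ k') x = (\<tau> ^^ k) x" by blast
    have zB: "(\<tau> ^^ k) x \<in> B" using funpow_in[OF p that] .
    show ?case
    proof (cases "(\<tau> ^^ k) x = a")
      case True
      have "(s ^^ Suc (Suc k')) x = s (s ((s ^^ k') x))" by simp
      also have "\<dots> = \<tau> a" using k' True s_a s_N by simp
      finally show ?thesis using True by (intro exI[of _ "Suc (Suc k')"]) simp
    next
      case False
      have "(\<tau> ^^ k) x \<noteq> N" using zB N by auto
      then have "(s ^^ Suc k') x = (\<tau> ^^ Suc k) x" using k' s_z[OF False] by simp
      then show ?thesis by blast
    qed
  qed
  have orbB: "\<exists>k. (s ^^ k) x = y" if xy: "x \<in> B" "y \<in> B" for x y
  proof -
    obtain k where "(\<tau> ^^ k) x = y" using c xy by (auto simp: cyclic_arrangement_def)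
    then show ?thesis using claim[OF xy(1), of k] by auto
  qed
  have orb: "\<exists>k. (s ^^ k) x = y" if "x \<in> insert N B" "y \<in> insert N B" for x y
  proof -
    have toN: "\<exists>k. (s ^^ k) x = N" if xB: "x \<in> B" for x
    proof -
      obtain k where "(s ^^ k) x = a" using orbB[OF xB a] by blast
      then have "(s ^^ Suc k) x = N" using s_a by simp
      then show ?thesis by blast
    qed
    have fromN: "\<exists>k. (s ^^ k) N = y" if yB: "y \<in> B" for y
    proof -
      have "\<tau> a \<in> B" using permutes_in_image[OF p, of a] a by simp
      then obtain k where "(s ^^ k) (\<tau> a) = y" using orbB yB by blast
      then have "(s ^^ Suc k) N = y" using s_N by (simp add: funpow_Suc_right del: funpow.simps)
      then show ?thesis by blast
    qed
    show ?thesis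
    proof (cases "x = N")
      case True
      show ?thesis
      proof (cases "y = N")
        case True then show ?thesis using \<open>x = N\<close> by (intro exI[of _ 0]) simp
      next
        case False then show ?thesis using fromN \<open>x = N\<close> that by auto
      qed
    next
      case False
      then have xB: "x \<in> B" using that by auto
      show ?thesis
      proof (cases "y = N")
        case True then show ?thesis using toN xB by auto
      next
        case False then show ?thesis using orbB xB that by auto
      qed
    qed
  qed
  show ?thesis using perm orb by (simp add: cyclic_arrangement_def s_def[symmetric])
qed

lemma cyc_remove:
  assumes c: "cyclic_arrangement B \<sigma>" and N: "N \<in> B" and sa: "\<sigma> a = N" and aN: "a \<noteq> N"
  shows "cyclic_arrangement (B - {N}) (\<sigma> \<circ> transpose a N)"
proof -
  define s where "s = \<sigma> \<circ> transpose a N"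
  have p: "\<sigma> permutes B" using c by (simp add: cyclic_arrangement_def)
  have aB: "a \<in> B" using sa N permutes_in_image[OF p, of a] by simp
  have perm0: "s permutes B" unfolding s_def
    by (rule permutes_compose) (auto intro: permutes_swap_id p simp: aB N)
  have s_N: "s N = N" using sa by (simp add: s_def)
  have perm: "s permutes (B - {N})"
    by (rule permutes_superset[OF perm0]) (use s_N in auto)
  have inj: "inj \<sigma>" using p by (rule permutes_inj)
  have sNN: "\<sigma> N \<noteq> N" using inj sa aN by (metis injD)
  have s_a: "s a = \<sigma> N" by (simp add: s_def)
  have s_z: "s z = \<sigma> z" if "z \<noteq> a" "z \<noteq> N" for z using that by (simp add: s_def)
  have claim: "\<exists>k'. ((\<sigma> ^^ k) x = (s ^^ k') x \<and> (\<sigma> ^^ k) x \<noteq> N) \<or> ((\<sigma> ^^ k) x = N \<and> (s ^^ k') x = a)"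
    if "x \<in> B - {N}" for x k
  proof (induction k)
    case 0 then show ?case using that by (intro exI[of _ 0]) simp
  next
    case (Suc k)
    then obtain k' where k': "((\<sigma> ^^ k) x = (s ^^ k') x \<and> (\<sigma> ^^ k) x \<noteq> N) \<or> ((\<sigma> ^^ k) x = N \<and> (s ^^ k') x = a)"
      by blast
    then show ?case
    proof
      assume h: "(\<sigma> ^^ k) x = (s ^^ k') x \<and> (\<sigma> ^^ k) x \<noteq> N"
      show ?case
      proof (cases "(\<sigma> ^^ k) x = a")
        case True
        then show ?thesis using h sa by (intro exI[of _ k']) simp
      next
        case False
        have "\<sigma> ((\<sigma> ^^ k) x) \<noteq> N" using False sa inj by (metis injD)
        moreover have "s ((\<sigma> ^^ k) x) = \<sigma> ((\<sigma> ^^ k) x)" using s_z[OF False] h by simp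
        ultimately show ?thesis using h by (intro exI[of _ "Suc k'"]) simp
      qed
    next
      assume h: "(\<sigma> ^^ k) x = N \<and> (s ^^ k') x = a"
      then have "(s ^^ Suc k') x = \<sigma> N" using s_a by simp
      then show ?case using h sNN by (intro exI[of _ "Suc k'"]) simp
    qed
  qed
  have orb: "\<exists>k. (s ^^ k) x = y" if xy: "x \<in> B - {N}" "y \<in> B - {N}" for x y
  proof -
    obtain k where k: "(\<sigma> ^^ k) x = y" using c xy by (auto simp: cyclic_arrangement_def)
    obtain k' where "((\<sigma> ^^ k) x = (s ^^ k') x \<and> (\<sigma> ^^ k) x \<noteq> N) \<or> ((\<sigma> ^^ k) x = N \<and> (s ^^ k') x = a)"
      using claim[OF xy(1), of k] by blast
    then have "(s ^^ k') x = y" using k xy(2) by auto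
    then show ?thesis by blast
  qed
  show ?thesis using perm orb by (simp add: cyclic_arrangement_def s_def[symmetric])
qed

type_synonym lcyc = "(nat set \<times> (nat \<Rightarrow> nat)) set"

definition nonmin :: "nat set \<Rightarrow> nat set" where "nonmin B = B - {Min B}"
definition dset :: "lcyc \<Rightarrow> nat set" where "dset L = (\<Union>p\<in>L. nonmin (fst p))"
definition mins :: "lcyc \<Rightarrow> nat set" where "mins L = (\<lambda>p. Min (fst p)) ` L"

lemma lc_iff: "linked_cycle m L \<longleftrightarrow>
   (\<forall>p\<in>L. fst p \<noteq> {} \<and> fst p \<subseteq> {1..m} \<and> cyclic_arrangement (fst p) (snd p)) \<and>
   (\<Union>p\<in>L. fst p) = {1..m} \<and> inj_on fst L \<and>
   (\<forall>p\<in>L. \<forall>q\<in>L. fst p \<noteq> fst q \<longrightarrow> nearly_disjoint (fst p) (fst q))"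
  unfolding linked_cycle_def linked_partition_def by (simp add: case_prod_beta) blast

lemma nd_sym: "nearly_disjoint E F \<longleftrightarrow> nearly_disjoint F E"
  unfolding nearly_disjoint_def by blast

lemma nd_disj: "E \<inter> F = {} \<Longrightarrow> nearly_disjoint E F"
  unfolding nearly_disjoint_def by blast

lemma nd_Min:
  assumes "nearly_disjoint E F" "finite E" "finite F" "E \<noteq> {}" "F \<noteq> {}"
  shows "Min E \<noteq> Min F"
proof
  assume h: "Min E = Min F"
  have "Min E \<in> E" "Min F \<in> F" using assms by simp_all
  then have "Min E \<in> E \<inter> F" using h by simp
  then show False using assms(1) h unfolding nearly_disjoint_def by blast
qed

lemma nd_nonmin: "nearly_disjoint E F \<Longrightarrow> x \<in> nonmin E \<Longrightarrow> x \<in> nonmin F \<Longrightarrow> False"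
  unfolding nearly_disjoint_def nonmin_def by blast

lemma nd_single: "nearly_disjoint {x} F \<Longrightarrow> x \<in> F \<Longrightarrow> False"
  unfolding nearly_disjoint_def by auto

context
  fixes m :: nat and L :: lcyc
  assumes lc: "linked_cycle m L"
begin

lemma lc_ne: "p \<in> L \<Longrightarrow> fst p \<noteq> {}" using lc by (simp add: lc_iff)
lemma lc_sub: "p \<in> L \<Longrightarrow> fst p \<subseteq> {1..m}" using lc by (simp add: lc_iff)
lemma lc_cyc: "p \<in> L \<Longrightarrow> cyclic_arrangement (fst p) (snd p)" using lc by (simp add: lc_iff)
lemma lc_Un: "(\<Union>p\<in>L. fst p) = {1..m}" using lc by (simp add: lc_iff)
lemma lc_inj: "inj_on fst L" using lc by (simp add: lc_iff)
lemma lc_nd: "p \<in> L \<Longrightarrow> q \<in> L \<Longrightarrow> fst p \<noteq> fst q \<Longrightarrow> nearly_disjoint (fst p) (fst q)"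
  using lc by (simp add: lc_iff)
lemma lc_fin_block: "p \<in> L \<Longrightarrow> finite (fst p)" using lc_sub finite_subset by blast
lemma lc_ndp: "p \<in> L \<Longrightarrow> q \<in> L \<Longrightarrow> p \<noteq> q \<Longrightarrow> nearly_disjoint (fst p) (fst q)"
  using lc_nd lc_inj by (meson inj_onD)

lemma lc_finite: "finite L"
proof -
  have "fst ` L \<subseteq> Pow {1..m}" using lc_sub by auto
  then have "finite (fst ` L)" by (rule finite_subset) simp
  then show ?thesis using lc_inj finite_imageD by blast
qed

lemma lc_notin: "p \<in> L \<Longrightarrow> m < x \<Longrightarrow> x \<notin> fst p" using lc_sub by fastforce

lemma lc_Min_inj: "inj_on (\<lambda>p. Min (fst p)) L"
proof (rule inj_onI)
  fix p q assume pq: "p \<in> L" "q \<in> L" "Min (fst p) = Min (fst q)"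
  show "p = q"
  proof (rule ccontr)
    assume "p \<noteq> q"
    then show False using nd_Min[OF lc_ndp[OF pq(1,2)]] pq lc_fin_block lc_ne by blast
  qed
qed

lemma lc_count: "card (dset L - mins L) + (\<Sum>p\<in>L. card (fst p)) = m + card (dset L)"
proof -
  have fL: "finite L" by (rule lc_finite)
  have "(\<Sum>p\<in>L. card (fst p)) = (\<Sum>p\<in>L. 1 + card (nonmin (fst p)))"
  proof (rule sum.cong[OF refl])
    fix p assume p: "p \<in> L"
    have "Min (fst p) \<in> fst p" using lc_fin_block[OF p] lc_ne[OF p] by simp
    then have "card (fst p) > 0" using lc_fin_block[OF p] card_gt_0_iff by blast
    then show "card (fst p) = 1 + card (nonmin (fst p))"
      using lc_fin_block[OF p] \<open>Min (fst p) \<in> fst p\<close> by (simp add: nonmin_def card_Diff_singleton)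
  qed
  also have "\<dots> = card L + (\<Sum>p\<in>L. card (nonmin (fst p)))" by (simp only: sum.distrib) simp
  also have "(\<Sum>p\<in>L. card (nonmin (fst p))) = card (dset L)"
    unfolding dset_def
  proof (rule card_UN_disjoint[symmetric])
    show "finite L" by (rule fL)
    show "\<forall>p\<in>L. finite (nonmin (fst p))" using lc_fin_block by (simp add: nonmin_def)
    show "\<forall>p\<in>L. \<forall>q\<in>L. p \<noteq> q \<longrightarrow> nonmin (fst p) \<inter> nonmin (fst q) = {}"
      using lc_ndp nd_nonmin by blast
  qed
  also have "card L = card (mins L)" unfolding mins_def using card_image[OF lc_Min_inj] by simp
  finally have e1: "(\<Sum>p\<in>L. card (fst p)) = card (mins L) + card (dset L)" .
  have un: "dset L \<union> mins L = {1..m}"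
  proof
    have "Min (fst p) \<in> {1..m}" if "p \<in> L" for p
      using lc_sub[OF that] Min_in[OF lc_fin_block[OF that] lc_ne[OF that]] by blast
    then show "dset L \<union> mins L \<subseteq> {1..m}"
      unfolding dset_def mins_def nonmin_def using lc_sub by blast
    show "{1..m} \<subseteq> dset L \<union> mins L"
    proof
      fix x assume "x \<in> {1..m}"
      then obtain p where p: "p \<in> L" "x \<in> fst p" using lc_Un by blast
      then show "x \<in> dset L \<union> mins L"
        unfolding dset_def mins_def nonmin_def by (cases "x = Min (fst p)") auto
    qed
  qed
  have fd: "finite (dset L)" "finite (mins L)" using un finite_subset by (metis finite_atLeastAtMost sup.cobounded1 sup.cobounded2)+
  have "card (dset L - mins L) + card (mins L) = card (dset L \<union> mins L)"
  proof -
    have "(dset L - mins L) \<inter> mins L = {}" by blast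
    moreover have "(dset L - mins L) \<union> mins L = dset L \<union> mins L" by blast
    ultimately show ?thesis using card_Un_disjoint[of "dset L - mins L" "mins L"] fd by simp
  qed
  then show ?thesis using e1 un by simp
qed

end

lemma lc_dset_sub: "linked_cycle m L \<Longrightarrow> dset L \<subseteq> {1..m}"
  using lc_sub unfolding dset_def nonmin_def by blast

lemma lc_ins_gen:
  assumes K: "\<forall>p\<in>K. fst p \<noteq> {} \<and> fst p \<subseteq> {1..M} \<and> cyclic_arrangement (fst p) (snd p)"
    and inj: "inj_on fst K"
    and nd: "\<forall>p\<in>K. \<forall>q\<in>K. fst p \<noteq> fst q \<longrightarrow> nearly_disjoint (fst p) (fst q)"
    and e: "fst e \<noteq> {}" "fst e \<subseteq> {1..M}" "cyclic_arrangement (fst e) (snd e)" "fst e \<notin> fst ` K"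
    and nde: "\<forall>q\<in>K. nearly_disjoint (fst e) (fst q)"
    and un: "fst e \<union> (\<Union>p\<in>K. fst p) = {1..M}"
  shows "linked_cycle M (insert e K)"
  unfolding lc_iff
proof (intro conjI)
  show "\<forall>p\<in>insert e K. fst p \<noteq> {} \<and> fst p \<subseteq> {1..M} \<and> cyclic_arrangement (fst p) (snd p)"
    using K e by blast
  show "(\<Union>p\<in>insert e K. fst p) = {1..M}" using un by simp
  show "inj_on fst (insert e K)" using inj e(4) by (simp add: inj_on_insert) (use e(4) in blast)
  show "\<forall>p\<in>insert e K. \<forall>q\<in>insert e K. fst p \<noteq> fst q \<longrightarrow> nearly_disjoint (fst p) (fst q)"
    using nd nde nd_sym by blast
qed

lemma lc_sub_gen:
  assumes lc: "linked_cycle M L" and KL: "K \<subseteq> L" and sub: "\<forall>p\<in>K. fst p \<subseteq> {1..M'}"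
    and un: "(\<Union>p\<in>K. fst p) = {1..M'}"
  shows "linked_cycle M' K"
  unfolding lc_iff
proof (intro conjI)
  show "\<forall>p\<in>K. fst p \<noteq> {} \<and> fst p \<subseteq> {1..M'} \<and> cyclic_arrangement (fst p) (snd p)"
    using sub KL lc_ne[OF lc] lc_cyc[OF lc] by blast
  show "(\<Union>p\<in>K. fst p) = {1..M'}" by (rule un)
  show "inj_on fst K" using lc_inj[OF lc] KL by (rule inj_on_subset)
  show "\<forall>p\<in>K. \<forall>q\<in>K. fst p \<noteq> fst q \<longrightarrow> nearly_disjoint (fst p) (fst q)"
    using lc_nd[OF lc] KL by blast
qed

lemma lc_props:
  assumes "linked_cycle m L"
  shows "\<forall>p\<in>L. fst p \<noteq> {} \<and> fst p \<subseteq> {1..m} \<and> cyclic_arrangement (fst p) (snd p)"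
    "inj_on fst L" "\<forall>p\<in>L. \<forall>q\<in>L. fst p \<noteq> fst q \<longrightarrow> nearly_disjoint (fst p) (fst q)"
  using assms by (simp_all add: lc_iff)

lemma closA:
  assumes lc: "linked_cycle m L"
  shows "linked_cycle (Suc m) (insert ({Suc m}, id) L)"
proof (rule lc_ins_gen)
  show "\<forall>p\<in>L. fst p \<noteq> {} \<and> fst p \<subseteq> {1..Suc m} \<and> cyclic_arrangement (fst p) (snd p)"
    using lc_props(1)[OF lc] by fastforce
  show "fst ({Suc m}, id) \<notin> fst ` L" using lc_notin[OF lc] by fastforce
  show "\<forall>q\<in>L. nearly_disjoint (fst ({Suc m}, id)) (fst q)"
    using lc_notin[OF lc] by (auto intro!: nd_disj)
  show "fst ({Suc m}, id) \<union> (\<Union>p\<in>L. fst p) = {1..Suc m}" using lc_Un[OF lc] by auto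
qed (use lc_props[OF lc] cyc_sing in auto)

lemma closB:
  assumes lc: "linked_cycle m L" and i: "i \<in> dset L - mins L"
  shows "linked_cycle (Suc m) (insert ({i, Suc m}, transpose i (Suc m)) L)"
proof -
  have im: "i \<in> {1..m}" using i lc_dset_sub[OF lc] by blast
  show ?thesis
  proof (rule lc_ins_gen)
    show "\<forall>p\<in>L. fst p \<noteq> {} \<and> fst p \<subseteq> {1..Suc m} \<and> cyclic_arrangement (fst p) (snd p)"
      using lc_props(1)[OF lc] by fastforce
    show "fst ({i, Suc m}, transpose i (Suc m)) \<notin> fst ` L" using lc_notin[OF lc] by fastforce
    show "\<forall>q\<in>L. nearly_disjoint (fst ({i, Suc m}, transpose i (Suc m))) (fst q)"
    proof
      fix q assume q: "q \<in> L"
      have "Min (fst q) \<noteq> i" using i q unfolding mins_def by auto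
      moreover have "Min {i, Suc m} = i" using im by simp
      moreover have "card {i, Suc m} = 2" using im by simp
      moreover have "Suc m \<notin> fst q" using lc_notin[OF lc q] by simp
      ultimately show "nearly_disjoint (fst ({i, Suc m}, transpose i (Suc m))) (fst q)"
        unfolding nearly_disjoint_def by auto
    qed
    show "fst ({i, Suc m}, transpose i (Suc m)) \<union> (\<Union>p\<in>L. fst p) = {1..Suc m}"
      using lc_Un[OF lc] im by auto
    show "cyclic_arrangement (fst ({i, Suc m}, transpose i (Suc m))) (snd ({i, Suc m}, transpose i (Suc m)))"
      using cyc_pair[of i "Suc m"] im by simp
  qed (use lc_props[OF lc] im in auto)
qed

lemma Min_insert_big:
  assumes "finite B" "B \<noteq> {}" "\<forall>x\<in>B. x < N"
  shows "Min (insert N B) = Min B"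
proof -
  have "Min B < N" using assms by simp
  moreover have "Min (insert N B) = min N (Min B)" using Min_insert[OF assms(1,2)] .
  ultimately show ?thesis by simp
qed

lemma closC:
  assumes lc: "linked_cycle m L" and p: "p \<in> L" and a: "a \<in> fst p"
  shows "linked_cycle (Suc m) (insert (insert (Suc m) (fst p), snd p \<circ> transpose a (Suc m)) (L - {p}))"
proof -
  have pr: "\<forall>p\<in>L. fst p \<noteq> {} \<and> fst p \<subseteq> {1..m} \<and> cyclic_arrangement (fst p) (snd p)"
    using lc_props(1)[OF lc] .
  have lt: "\<forall>x\<in>fst p. x < Suc m" using lc_sub[OF lc p] by auto
  have Nn: "Suc m \<notin> fst p" using lt by blast
  have mB: "Min (insert (Suc m) (fst p)) = Min (fst p)"
    using Min_insert_big[OF lc_fin_block[OF lc p] lc_ne[OF lc p] lt] .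
  show ?thesis
  proof (rule lc_ins_gen)
    show "\<forall>r\<in>L - {p}. fst r \<noteq> {} \<and> fst r \<subseteq> {1..Suc m} \<and> cyclic_arrangement (fst r) (snd r)"
      using pr by fastforce
    show "inj_on fst (L - {p})" using lc_inj[OF lc] by (rule inj_on_subset) blast
    show "\<forall>r\<in>L - {p}. \<forall>q\<in>L - {p}. fst r \<noteq> fst q \<longrightarrow> nearly_disjoint (fst r) (fst q)"
      using lc_props(3)[OF lc] by blast
    show "fst (insert (Suc m) (fst p), snd p \<circ> transpose a (Suc m)) \<noteq> {}" by simp
    show "fst (insert (Suc m) (fst p), snd p \<circ> transpose a (Suc m)) \<subseteq> {1..Suc m}"
      using lc_sub[OF lc p] by auto
    show "cyclic_arrangement (fst (insert (Suc m) (fst p), snd p \<circ> transpose a (Suc m)))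
        (snd (insert (Suc m) (fst p), snd p \<circ> transpose a (Suc m)))"
      using cyc_insert[OF lc_cyc[OF lc p] a Nn] by simp
    show "fst (insert (Suc m) (fst p), snd p \<circ> transpose a (Suc m)) \<notin> fst ` (L - {p})"
      using lc_notin[OF lc] by fastforce
    show "fst (insert (Suc m) (fst p), snd p \<circ> transpose a (Suc m)) \<union> (\<Union>r\<in>L - {p}. fst r) = {1..Suc m}"
    proof -
      have "fst p \<union> (\<Union>r\<in>L - {p}. fst r) = {1..m}" using lc_Un[OF lc] p by blast
      moreover have "{1..Suc m} = insert (Suc m) {1..m}" by (simp add: atLeastAtMostSuc_conv)
      ultimately show ?thesis by auto
    qed
    show "\<forall>q\<in>L - {p}. nearly_disjoint (fst (insert (Suc m) (fst p), snd p \<circ> transpose a (Suc m))) (fst q)"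
    proof
      fix q assume q: "q \<in> L - {p}"
      have ne: "fst p \<noteq> fst q"
      proof
        assume "fst p = fst q"
        then have "p = q" using q p inj_onD[OF lc_inj[OF lc]] by blast
        then show False using q by blast
      qed
      have nd: "nearly_disjoint (fst p) (fst q)" using lc_nd[OF lc p _ ne] q by blast
      have Nq: "Suc m \<notin> fst q" using lc_notin[OF lc] q by blast
      have c: "card (insert (Suc m) (fst p)) > 1"
      proof -
        have "card (insert (Suc m) (fst p)) = Suc (card (fst p))"
          using Nn lc_fin_block[OF lc p] by simp
        moreover have "card (fst p) > 0" using lc_fin_block[OF lc p] lc_ne[OF lc p] card_gt_0_iff by blast
        ultimately show ?thesis by simp
      qed
      show "nearly_disjoint (fst (insert (Suc m) (fst p), snd p \<circ> transpose a (Suc m))) (fst q)"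
        using nd Nq mB c unfolding nearly_disjoint_def by auto
    qed
  qed
qed

lemma dset_insert: "dset (insert e L) = nonmin (fst e) \<union> dset L"
  by (simp add: dset_def)

lemma dsetA: "dset (insert ({N}, id) L) = dset L"
  by (simp add: dset_insert nonmin_def)

lemma dsetB: "i < N \<Longrightarrow> dset (insert ({i, N}, f) L) = insert N (dset L)"
  by (auto simp add: dset_insert nonmin_def)

lemma dsetC:
  assumes lc: "linked_cycle m L" and p: "p \<in> L"
  shows "dset (insert (insert (Suc m) (fst p), f) (L - {p})) = insert (Suc m) (dset L)"
proof -
  have lt: "\<forall>x\<in>fst p. x < Suc m" using lc_sub[OF lc p] by auto
  have mB: "Min (insert (Suc m) (fst p)) = Min (fst p)"
    using Min_insert_big[OF lc_fin_block[OF lc p] lc_ne[OF lc p] lt] .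
  have "Min (fst p) \<noteq> Suc m" using lt Min_in[OF lc_fin_block[OF lc p] lc_ne[OF lc p]] by auto
  then have nm: "nonmin (insert (Suc m) (fst p)) = insert (Suc m) (nonmin (fst p))"
    using mB by (auto simp: nonmin_def)
  have "dset L = nonmin (fst p) \<union> dset (L - {p})"
    using p dset_insert[of p "L - {p}"] by (simp add: insert_absorb)
  then show ?thesis using nm by (simp add: dset_insert)
qed

lemma card_dset_ins:
  assumes "linked_cycle m L"
  shows "card (insert (Suc m) (dset L)) = Suc (card (dset L))"
proof -
  have "dset L \<subseteq> {1..m}" by (rule lc_dset_sub[OF assms])
  then have "finite (dset L)" "Suc m \<notin> dset L" using finite_subset by auto
  then show ?thesis by simp
qed

definition insA :: "nat \<Rightarrow> lcyc \<Rightarrow> lcyc" where "insA m L = insert ({Suc m}, id) L"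
definition insB :: "nat \<Rightarrow> lcyc \<Rightarrow> nat \<Rightarrow> lcyc" where
  "insB m L i = insert ({i, Suc m}, transpose i (Suc m)) L"
definition insC :: "nat \<Rightarrow> lcyc \<Rightarrow> (nat set \<times> (nat \<Rightarrow> nat)) \<Rightarrow> nat \<Rightarrow> lcyc" where
  "insC m L p a = insert (insert (Suc m) (fst p), snd p \<circ> transpose a (Suc m)) (L - {p})"

lemma lc_notin_e: "linked_cycle m L \<Longrightarrow> Suc m \<in> fst e \<Longrightarrow> e \<notin> L"
  using lc_notin by blast

lemma lc_notin_e2: "linked_cycle m L \<Longrightarrow> Suc m \<in> fst e \<Longrightarrow> e \<notin> L - X"
  using lc_notin by blast

lemma comp_transpose_cancel: "(f \<circ> transpose a b) \<circ> transpose a b = f"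
  by (rule ext) simp

lemma injA:
  assumes "linked_cycle m L1" "linked_cycle m L2" "insA m L1 = insA m L2"
  shows "L1 = L2"
proof -
  have "({Suc m}, id) \<notin> L1" by (rule lc_notin_e[OF assms(1)]) simp
  moreover have "({Suc m}, id) \<notin> L2" by (rule lc_notin_e[OF assms(2)]) simp
  ultimately show ?thesis using assms(3) unfolding insA_def by (simp add: insert_ident)
qed

lemma injB:
  assumes l1: "linked_cycle m L1" and l2: "linked_cycle m L2"
    and i1: "i1 \<in> dset L1" and i2: "i2 \<in> dset L2" and eq: "insB m L1 i1 = insB m L2 i2"
  shows "L1 = L2 \<and> i1 = i2"
proof -
  have i1m: "i1 \<le> m" "i2 \<le> m" using lc_dset_sub[OF l1] lc_dset_sub[OF l2] i1 i2 by auto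
  let ?e1 = "({i1, Suc m}, transpose i1 (Suc m))" and ?e2 = "({i2, Suc m}, transpose i2 (Suc m))"
  have n1: "?e1 \<notin> L1" "?e1 \<notin> L2" "?e2 \<notin> L1" "?e2 \<notin> L2"
    by ((rule lc_notin_e[OF l1] lc_notin_e[OF l2]), simp)+
  have "?e1 \<in> insert ?e2 L2" using eq unfolding insB_def by blast
  then have "?e1 = ?e2" using n1 by blast
  then have "{i1, Suc m} = {i2, Suc m}" by simp
  then have ii: "i1 = i2" using i1m by (auto simp: doubleton_eq_iff)
  then have "L1 = L2" using eq n1 unfolding insB_def by (simp add: insert_ident)
  then show ?thesis using ii by simp
qed

lemma injC:
  assumes l1: "linked_cycle m L1" and l2: "linked_cycle m L2"
    and p1: "p1 \<in> L1" "a1 \<in> fst p1" and p2: "p2 \<in> L2" "a2 \<in> fst p2"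
    and eq: "insC m L1 p1 a1 = insC m L2 p2 a2"
  shows "L1 = L2 \<and> p1 = p2 \<and> a1 = a2"
proof -
  let ?N = "Suc m"
  let ?e1 = "(insert ?N (fst p1), snd p1 \<circ> transpose a1 ?N)"
  let ?e2 = "(insert ?N (fst p2), snd p2 \<circ> transpose a2 ?N)"
  have N1: "?N \<notin> fst p1" using lc_notin[OF l1 p1(1), of "Suc m"] by simp
  have N2: "?N \<notin> fst p2" using lc_notin[OF l2 p2(1), of "Suc m"] by simp
  have n1: "?e1 \<notin> L2 - {p2}" by (rule lc_notin_e2[OF l2]) simp
  have n1': "?e2 \<notin> L1 - {p1}" by (rule lc_notin_e2[OF l1]) simp
  have n2: "?e1 \<notin> L1 - {p1}" by (rule lc_notin_e2[OF l1]) simp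
  have n2': "?e2 \<notin> L2 - {p2}" by (rule lc_notin_e2[OF l2]) simp
  have "?e1 \<in> insert ?e2 (L2 - {p2})" using eq unfolding insC_def by blast
  then have ee: "?e1 = ?e2" using n1 by blast
  then have "insert ?N (fst p1) = insert ?N (fst p2)" by simp
  then have f: "fst p1 = fst p2" using N1 N2 by (simp add: insert_ident)
  have s: "snd p1 \<circ> transpose a1 ?N = snd p2 \<circ> transpose a2 ?N" using ee by simp
  have pm1: "snd p1 permutes fst p1" using lc_cyc[OF l1 p1(1)] by (simp add: cyclic_arrangement_def)
  have pm2: "snd p2 permutes fst p2" using lc_cyc[OF l2 p2(1)] by (simp add: cyclic_arrangement_def)
  have aa: "a1 = a2"
  proof (rule ccontr)
    assume ne: "a1 \<noteq> a2"
    have "(snd p1 \<circ> transpose a1 ?N) a1 = ?N" using permutes_not_in[OF pm1 N1] by simp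
    moreover have "a1 \<noteq> ?N" using p1 N1 by auto
    then have "(snd p2 \<circ> transpose a2 ?N) a1 = snd p2 a1" using ne by simp
    moreover have "snd p2 a1 \<in> fst p2" using permutes_in_image[OF pm2, of a1] p1(2) f by simp
    ultimately show False using s N2 by auto
  qed
  have "snd p1 = snd p2"
    using arg_cong[OF s, of "\<lambda>f. f \<circ> transpose a1 ?N"] aa by (simp add: comp_transpose_cancel)
  then have pp: "p1 = p2" using f by (simp add: prod_eq_iff)
  have "L1 - {p1} = L2 - {p2}" using eq n2 n2' ee pp unfolding insC_def by (simp add: insert_ident)
  then have "L1 = L2" using p1 p2 pp by blast
  then show ?thesis using pp aa by simp
qed

lemma disjAB:
  assumes l2: "linked_cycle m L2" and i: "i \<in> dset L2" and eq: "insA m L1 = insB m L2 i"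
  shows False
proof -
  have im: "i \<le> m" using lc_dset_sub[OF l2] i by auto
  have "({Suc m}, id) \<notin> L2" by (rule lc_notin_e[OF l2]) simp
  moreover have "({Suc m}, id) \<in> insB m L2 i" unfolding eq[symmetric] insA_def by simp
  then have "({Suc m}, id) \<in> insert ({i, Suc m}, transpose i (Suc m)) L2" unfolding insB_def .
  ultimately have "{Suc m} = {i, Suc m}" by auto
  then show False using im by (auto simp: doubleton_eq_iff)
qed

lemma disjAC:
  assumes l2: "linked_cycle m L2" and p: "p \<in> L2" and eq: "insA m L1 = insC m L2 p a"
  shows False
proof -
  have "({Suc m}, id) \<notin> L2 - {p}" by (rule lc_notin_e2[OF l2]) simp
  moreover have "({Suc m}, id) \<in> insC m L2 p a" unfolding eq[symmetric] insA_def by simp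
  then have "({Suc m}, id) \<in> insert (insert (Suc m) (fst p), snd p \<circ> transpose a (Suc m)) (L2 - {p})"
    unfolding insC_def .
  ultimately have "{Suc m} = insert (Suc m) (fst p)" by auto
  moreover have "fst p \<noteq> {}" "Suc m \<notin> fst p" using lc_ne[OF l2 p] lc_notin[OF l2 p] by auto
  ultimately show False by blast
qed

lemma disjBC:
  assumes l1: "linked_cycle m L1" and i: "i \<in> dset L1"
    and l2: "linked_cycle m L2" and p: "p \<in> L2"
    and eq: "insB m L1 i = insC m L2 p a"
  shows False
proof -
  let ?N = "Suc m"
  have im: "i \<le> m" using lc_dset_sub[OF l1] i by auto
  have "({i, ?N}, transpose i ?N) \<notin> L2 - {p}" by (rule lc_notin_e2[OF l2]) simp
  moreover have "({i, ?N}, transpose i ?N) \<in> insC m L2 p a" unfolding eq[symmetric] insB_def by simp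
  then have "({i, ?N}, transpose i ?N) \<in> insert (insert ?N (fst p), snd p \<circ> transpose a ?N) (L2 - {p})"
    unfolding insC_def .
  ultimately have ie: "{i, ?N} = insert ?N (fst p)" by auto
  have "?N \<notin> fst p" using lc_notin[OF l2 p, of "Suc m"] by simp
  then have "fst p = insert ?N (fst p) - {?N}" by simp
  also have "\<dots> = {i, ?N} - {?N}" using ie by simp
  also have "\<dots> = {i}" using im by auto
  finally have fp: "fst p = {i}" .
  obtain q where q: "q \<in> L1" "i \<in> nonmin (fst q)" using i unfolding dset_def by blast
  have "q \<in> insC m L2 p a" unfolding eq[symmetric] insB_def using q(1) by simp
  then have "q \<in> insert (insert ?N (fst p), snd p \<circ> transpose a ?N) (L2 - {p})"
    unfolding insC_def .
  moreover have "?N \<notin> fst q" using lc_notin[OF l1 q(1), of "Suc m"] by simp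
  ultimately have q2: "q \<in> L2" by auto
  have "fst q \<noteq> fst p" using q(2) fp by (auto simp: nonmin_def)
  then have "nearly_disjoint (fst p) (fst q)" using lc_nd[OF l2 p q2] by simp
  moreover have "i \<in> fst q" using q(2) by (simp add: nonmin_def)
  ultimately show False using nd_single fp by metis
qed

lemma maxblock:
  assumes "finite B" "B \<subseteq> {1..N}" "N \<in> B" "Min B = N"
  shows "B = {N}"
proof -
  have "\<forall>x\<in>B. N \<le> x" using assms(1,4) by (metis Min_le)
  then show ?thesis using assms(2,3) by fastforce
qed

lemma cover:
  assumes lc: "linked_cycle (Suc m) L"
  shows "(\<exists>L'. linked_cycle m L' \<and> L = insA m L') \<or>
         (\<exists>L' i. linked_cycle m L' \<and> i \<in> dset L' - mins L' \<and> L = insB m L' i) \<or>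
         (\<exists>L' p a. linked_cycle m L' \<and> p \<in> L' \<and> a \<in> fst p \<and> L = insC m L' p a)"
proof -
  let ?N = "Suc m"
  have "?N \<in> {1..Suc m}" by simp
  then obtain p0 where p0: "p0 \<in> L" "?N \<in> fst p0" using lc_Un[OF lc] by blast
  have uniq: "q = p0" if q: "q \<in> L" "?N \<in> fst q" for q
  proof (rule ccontr)
    assume ne: "q \<noteq> p0"
    have nd: "nearly_disjoint (fst q) (fst p0)" using lc_ndp[OF lc q(1) p0(1) ne] .
    have "?N \<in> fst q \<inter> fst p0" using q p0 by simp
    then have "(?N = Min (fst q) \<and> card (fst q) > 1) \<or> (?N = Min (fst p0) \<and> card (fst p0) > 1)"
      using nd unfolding nearly_disjoint_def by blast
    then show False
    proof
      assume h: "?N = Min (fst q) \<and> card (fst q) > 1"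
      then have "fst q = {?N}" using maxblock[OF lc_fin_block[OF lc q(1)] lc_sub[OF lc q(1)] q(2)] by simp
      then have "card (fst q) = 1" by simp
      then show False using h by linarith
    next
      assume h: "?N = Min (fst p0) \<and> card (fst p0) > 1"
      then have "fst p0 = {?N}" using maxblock[OF lc_fin_block[OF lc p0(1)] lc_sub[OF lc p0(1)] p0(2)] by simp
      then have "card (fst p0) = 1" by simp
      then show False using h by linarith
    qed
  qed
  define K where "K = L - {p0}"
  have KL: "K \<subseteq> L" by (simp add: K_def)
  have NK: "?N \<notin> fst q" if qK: "q \<in> K" for q
  proof
    assume h: "?N \<in> fst q"
    have "q \<in> L" "q \<noteq> p0" using qK by (auto simp: K_def)
    then show False using uniq[OF _ h] by blast
  qed
  have others: "fst q \<subseteq> {1..m}" if "q \<in> K" for q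
  proof
    fix x assume x: "x \<in> fst q"
    have "q \<in> L" using that KL by blast
    then have "x \<in> {1..Suc m}" using lc_sub[OF lc] x by blast
    moreover have "x \<noteq> Suc m" using NK[OF that] x by blast
    ultimately show "x \<in> {1..m}" by auto
  qed
  define B0 where "B0 = fst p0"
  define \<sigma>0 where "\<sigma>0 = snd p0"
  have p0e: "p0 = (B0, \<sigma>0)" by (simp add: B0_def \<sigma>0_def)
  have cyc0: "cyclic_arrangement B0 \<sigma>0" using lc_cyc[OF lc p0(1)] by (simp add: B0_def \<sigma>0_def)
  have NB0: "?N \<in> B0" using p0 by (simp add: B0_def)
  have fB0: "finite B0" using lc_fin_block[OF lc p0(1)] by (simp add: B0_def)
  have B0sub: "B0 \<subseteq> {1..Suc m}" using lc_sub[OF lc p0(1)] by (simp add: B0_def)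
  have Lrec: "L = insert p0 K" using p0(1) by (auto simp: K_def)
  have unK: "B0 \<union> (\<Union>q\<in>K. fst q) = {1..Suc m}" using lc_Un[OF lc] Lrec by (simp add: B0_def)
  have NUK: "?N \<notin> (\<Union>q\<in>K. fst q)" using NK by blast
  have sucm: "{1..Suc m} = insert ?N {1..m}" by (simp add: atLeastAtMostSuc_conv)
  have Km: "K \<subseteq> L - {p0}" by (simp add: K_def)
  show ?thesis
  proof (cases "B0 = {?N}")
    case True
    have s0: "\<sigma>0 = id" using cyc0 True cyc_sing by simp
    have "(\<Union>q\<in>K. fst q) = (B0 \<union> (\<Union>q\<in>K. fst q)) - {?N}" using True NUK by blast
    also have "\<dots> = {1..m}" using unK by auto
    finally have unK': "(\<Union>q\<in>K. fst q) = {1..m}" .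
    have "linked_cycle m K" using lc_sub_gen[OF lc KL] others unK' by blast
    moreover have "L = insA m K" using Lrec p0e True s0 by (simp add: insA_def)
    ultimately show ?thesis by blast
  next
    case notsing: False
    show ?thesis
    proof (cases "\<exists>i. B0 = {i, ?N} \<and> (\<exists>q\<in>K. i \<in> fst q)")
      case True
      then obtain i q where iq: "B0 = {i, ?N}" "q \<in> K" "i \<in> fst q" by blast
      have iN: "i \<noteq> ?N" using iq notsing by auto
      have im: "i \<in> {1..m}" using others[OF iq(2)] iq(3) by blast
      have s0: "\<sigma>0 = transpose i ?N" using cyc_pair_unique[OF iN] cyc0 iq(1) by simp
      have minB0: "Min B0 = i" using iq(1) im by simp
      have noMin: "i \<noteq> Min (fst r)" if r: "r \<in> K" "i \<in> fst r" for r
      proof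
        assume h: "i = Min (fst r)"
        have "r \<noteq> p0" using r by (simp add: K_def)
        moreover have "r \<in> L" using r KL by blast
        ultimately have "nearly_disjoint (fst r) B0" using lc_ndp[OF lc _ p0(1)] by (simp add: B0_def)
        moreover have "i \<in> fst r \<inter> B0" using r iq(1) by simp
        ultimately have "(i = Min (fst r) \<and> card (fst r) > 1 \<and> i \<noteq> Min B0) \<or>
            (i = Min B0 \<and> card B0 > 1 \<and> i \<noteq> Min (fst r))"
          unfolding nearly_disjoint_def by (rule bspec)
        then show False using h minB0 by simp
      qed
      have unK': "(\<Union>q\<in>K. fst q) = {1..m}"
      proof
        show "(\<Union>q\<in>K. fst q) \<subseteq> {1..m}" using others by blast
        show "{1..m} \<subseteq> (\<Union>q\<in>K. fst q)"
        proof
          fix x assume x: "x \<in> {1..m}"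
          then have "x \<in> B0 \<union> (\<Union>q\<in>K. fst q)" using unK by auto
          moreover have "x \<in> B0 \<Longrightarrow> x = i" using iq(1) x by auto
          ultimately show "x \<in> (\<Union>q\<in>K. fst q)" using iq by blast
        qed
      qed
      have lcK: "linked_cycle m K" using lc_sub_gen[OF lc KL] others unK' by blast
      have "i \<in> dset K" using iq(2,3) noMin[OF iq(2,3)] unfolding dset_def nonmin_def by blast
      moreover have "i \<notin> mins K"
      proof
        assume "i \<in> mins K"
        then obtain r where r: "r \<in> K" "i = Min (fst r)" unfolding mins_def by blast
        have "i \<in> fst r" using r Min_in[OF lc_fin_block[OF lcK r(1)] lc_ne[OF lcK r(1)]] by simp
        then show False using noMin r by blast
      qed
      moreover have "L = insB m K i" using Lrec p0e iq(1) s0 by (simp add: insB_def)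
      ultimately show ?thesis using lcK by blast
    next
      case notpair: False
      obtain y where y: "y \<in> B0" "y \<noteq> ?N" using notsing NB0 by blast
      have perm: "\<sigma>0 permutes B0" using cyc0 by (simp add: cyclic_arrangement_def)
      have sN: "\<sigma>0 ?N \<noteq> ?N" using cyc_moves[OF cyc0 NB0 y(1) y(2)] .
      define a where "a = inv \<sigma>0 ?N"
      have sa: "\<sigma>0 a = ?N" using permutes_inverses(1)[OF perm] by (simp add: a_def)
      have aN: "a \<noteq> ?N" using sa sN by auto
      have aB0: "a \<in> B0" using permutes_in_image[OF perm, of a] sa NB0 by simp
      define B where "B = B0 - {?N}"
      define \<tau> where "\<tau> = \<sigma>0 \<circ> transpose a ?N"
      define p where "p = (B, \<tau>)"
      have aB: "a \<in> fst p" using aB0 aN by (simp add: p_def B_def)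
      have cycB: "cyclic_arrangement (fst p) (snd p)"
        using cyc_remove[OF cyc0 NB0 sa aN] by (simp add: p_def B_def \<tau>_def)
      have B0B: "B0 = insert ?N B" using NB0 by (auto simp: B_def)
      have fB: "finite B" using fB0 by (simp add: B_def)
      have Bne: "B \<noteq> {}" using y by (auto simp: B_def)
      have Blt: "\<forall>x\<in>B. x < ?N" using B0sub by (auto simp: B_def)
      have minB: "Min B0 = Min B" using Min_insert_big[OF fB Bne Blt] B0B by simp
      have Bsub: "B \<subseteq> {1..m}" using B0sub by (auto simp: B_def)
      have BnotK: "fst p \<notin> fst ` K"
      proof
        assume "fst p \<in> fst ` K"
        then obtain r where r: "r \<in> K" "fst r = B" by (auto simp: p_def)
        have "r \<noteq> p0" using r by (simp add: K_def)
        moreover have "r \<in> L" using r KL by blast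
        ultimately have "nearly_disjoint B0 (fst r)" using lc_ndp[OF lc p0(1)] by (simp add: B0_def)
        then have "Min B0 \<noteq> Min (fst r)"
          using nd_Min fB0 NB0 lc_fin_block[OF lc] lc_ne[OF lc] r KL by blast
        then show False using minB r by simp
      qed
      have ndB: "\<forall>r\<in>K. nearly_disjoint (fst p) (fst r)"
      proof
        fix r assume r: "r \<in> K"
        have "r \<noteq> p0" using r by (simp add: K_def)
        moreover have "r \<in> L" using r KL by blast
        ultimately have nd0: "nearly_disjoint B0 (fst r)" using lc_ndp[OF lc p0(1)] by (simp add: B0_def)
        show "nearly_disjoint (fst p) (fst r)"
          unfolding nearly_disjoint_def
        proof
          fix x assume x: "x \<in> fst p \<inter> fst r"
          then have xB: "x \<in> B" "x \<in> fst r" by (auto simp: p_def)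
          then have "x \<in> B0 \<inter> fst r" using B0B by auto
          then have "(x = Min B0 \<and> card B0 > 1 \<and> x \<noteq> Min (fst r)) \<or>
                     (x = Min (fst r) \<and> card (fst r) > 1 \<and> x \<noteq> Min B0)"
            using nd0 unfolding nearly_disjoint_def by blast
          then show "(x = Min (fst p) \<and> 1 < card (fst p) \<and> x \<noteq> Min (fst r)) \<or>
                     (x = Min (fst r) \<and> 1 < card (fst r) \<and> x \<noteq> Min (fst p))"
          proof
            assume h: "x = Min B0 \<and> card B0 > 1 \<and> x \<noteq> Min (fst r)"
            have "card B > 1"
            proof (rule ccontr)
              assume "\<not> card B > 1"
              then have "card B \<le> Suc 0" by simp
              then have "\<forall>u\<in>B. \<forall>v\<in>B. u = v" using card_le_Suc0_iff_eq[OF fB] by blast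
              then have "B = {x}" using xB(1) by blast
              then have "B0 = {x, ?N}" using B0B by auto
              then show False using notpair xB(2) r by blast
            qed
            then show ?thesis using h minB by (simp add: p_def)
          next
            assume h: "x = Min (fst r) \<and> card (fst r) > 1 \<and> x \<noteq> Min B0"
            then show ?thesis using minB by (simp add: p_def)
          qed
        qed
      qed
      have Kprops: "\<forall>r\<in>K. fst r \<noteq> {} \<and> fst r \<subseteq> {1..m} \<and> cyclic_arrangement (fst r) (snd r)"
        using others lc_ne[OF lc] lc_cyc[OF lc] KL by blast
      have unB: "fst p \<union> (\<Union>r\<in>K. fst r) = {1..m}"
      proof -
        have "B0 \<union> (\<Union>r\<in>K. fst r) - {?N} = {1..m}" using unK sucm by auto
        moreover have "B0 \<union> (\<Union>r\<in>K. fst r) - {?N} = B \<union> (\<Union>r\<in>K. fst r)" using NUK by (auto simp: B_def)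
        ultimately show ?thesis by (simp add: p_def)
      qed
      have lcL': "linked_cycle m (insert p K)"
      proof (rule lc_ins_gen)
        show "inj_on fst K" using lc_inj[OF lc] KL by (rule inj_on_subset)
        show "\<forall>pa\<in>K. \<forall>q\<in>K. fst pa \<noteq> fst q \<longrightarrow> nearly_disjoint (fst pa) (fst q)"
          using lc_nd[OF lc] KL by blast
        show "fst p \<noteq> {}" using Bne by (simp add: p_def)
        show "fst p \<subseteq> {1..m}" using Bsub by (simp add: p_def)
      qed (use Kprops cycB BnotK ndB unB in auto)
      have pK: "p \<notin> K" using BnotK by blast
      have "insC m (insert p K) p a = insert (insert ?N B, \<tau> \<circ> transpose a ?N) K"
        unfolding insC_def using pK by (simp add: p_def)
      also have "insert ?N B = B0" using B0B by simp
      also have "\<tau> \<circ> transpose a ?N = \<sigma>0" by (simp add: \<tau>_def comp_transpose_cancel)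
      finally have "L = insC m (insert p K) p a" using Lrec p0e by simp
      then show ?thesis using lcL' aB by blast
    qed
  qed
qed

lemma finite_lcs: "finite (linked_cycles m)"
proof (rule finite_subset)
  show "linked_cycles m \<subseteq> Pow (Pow {1..m} \<times> {\<sigma>. \<sigma> permutes {1..m}})"
  proof
    fix L assume "L \<in> linked_cycles m"
    then have lc: "linked_cycle m L" by (simp add: linked_cycles_def)
    have "p \<in> Pow {1..m} \<times> {\<sigma>. \<sigma> permutes {1..m}}" if p: "p \<in> L" for p
    proof -
      have "snd p permutes fst p" using lc_cyc[OF lc p] by (simp add: cyclic_arrangement_def)
      then have "snd p permutes {1..m}" using lc_sub[OF lc p] by (rule permutes_subset)
      then show ?thesis using lc_sub[OF lc p] by (cases p) auto
    qed
    then show "L \<in> Pow (Pow {1..m} \<times> {\<sigma>. \<sigma> permutes {1..m}})" by blast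
  qed
  show "finite (Pow (Pow {1..m} \<times> {\<sigma>. \<sigma> permutes {1..m}}))"
    by (simp add: finite_permutations)
qed

lemma lc_dset_fin: "linked_cycle m L \<Longrightarrow> finite (dset L)"
  using lc_dset_sub[of m L] finite_subset by blast

definition LCd :: "nat \<Rightarrow> nat \<Rightarrow> lcyc set" where
  "LCd m j = {L \<in> linked_cycles m. card (dset L) = j}"

definition SB :: "nat \<Rightarrow> nat \<Rightarrow> (lcyc \<times> nat) set" where
  "SB m j = Sigma {L \<in> linked_cycles m. card (dset L) + 1 = j} (\<lambda>L. dset L - mins L)"

definition SC :: "nat \<Rightarrow> nat \<Rightarrow> (lcyc \<times> ((nat set \<times> (nat \<Rightarrow> nat)) \<times> nat)) set" where
  "SC m j = Sigma {L \<in> linked_cycles m. card (dset L) + 1 = j} (\<lambda>L. Sigma L fst)"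

definition fB :: "nat \<Rightarrow> lcyc \<times> nat \<Rightarrow> lcyc" where "fB m x = insB m (fst x) (snd x)"
definition fC :: "nat \<Rightarrow> lcyc \<times> ((nat set \<times> (nat \<Rightarrow> nat)) \<times> nat) \<Rightarrow> lcyc" where
  "fC m x = insC m (fst x) (fst (snd x)) (snd (snd x))"

lemma dset_insA: "dset (insA m L) = dset L" by (simp add: insA_def dsetA)

lemma dset_insB: "linked_cycle m L \<Longrightarrow> i \<in> dset L \<Longrightarrow> card (dset (insB m L i)) = Suc (card (dset L))"
  using lc_dset_sub[of m L] card_dset_ins[of m L] by (auto simp: insB_def dsetB)

lemma dset_insC: "linked_cycle m L \<Longrightarrow> p \<in> L \<Longrightarrow> card (dset (insC m L p a)) = Suc (card (dset L))"
  using dsetC[of m L p] card_dset_ins[of m L] by (simp add: insC_def)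

lemma LCd_decomp:
  "LCd (Suc m) j = insA m ` LCd m j \<union> fB m ` SB m j \<union> fC m ` SC m j"
proof (intro equalityI subsetI)
  fix L assume "L \<in> LCd (Suc m) j"
  then have lc: "linked_cycle (Suc m) L" and d: "card (dset L) = j" by (auto simp: LCd_def linked_cycles_def)
  from cover[OF lc] show "L \<in> insA m ` LCd m j \<union> fB m ` SB m j \<union> fC m ` SC m j"
  proof (elim disjE exE conjE)
    fix L' assume l': "linked_cycle m L'" and e: "L = insA m L'"
    then have "L' \<in> LCd m j" using d dset_insA by (simp add: LCd_def linked_cycles_def)
    then show ?thesis using e by blast
  next
    fix L' i assume l': "linked_cycle m L'" and i: "i \<in> dset L' - mins L'" and e: "L = insB m L' i"
    have "card (dset L') + 1 = j" using d e dset_insB[OF l'] i by simp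
    then have "(L', i) \<in> SB m j" using l' i by (simp add: SB_def linked_cycles_def)
    moreover have "L = fB m (L', i)" using e by (simp add: fB_def)
    ultimately show ?thesis by blast
  next
    fix L' p a assume l': "linked_cycle m L'" and p: "p \<in> L'" "a \<in> fst p" and e: "L = insC m L' p a"
    have "card (dset L') + 1 = j" using d e dset_insC[OF l' p(1)] by simp
    then have "(L', (p, a)) \<in> SC m j" using l' p by (simp add: SC_def linked_cycles_def)
    moreover have "L = fC m (L', (p, a))" using e by (simp add: fC_def)
    ultimately show ?thesis by blast
  qed
next
  fix L assume "L \<in> insA m ` LCd m j \<union> fB m ` SB m j \<union> fC m ` SC m j"
  then show "L \<in> LCd (Suc m) j"
  proof (elim UnE)
    assume "L \<in> insA m ` LCd m j"
    then obtain L' where l': "L' \<in> LCd m j" "L = insA m L'" by blast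
    then have lc: "linked_cycle m L'" by (simp add: LCd_def linked_cycles_def)
    show ?thesis using closA[OF lc] l' dset_insA by (simp add: LCd_def linked_cycles_def insA_def)
  next
    assume "L \<in> fB m ` SB m j"
    then obtain L' i where l': "(L', i) \<in> SB m j" "L = insB m L' i" by (auto simp: fB_def)
    then have lc: "linked_cycle m L'" and i: "i \<in> dset L' - mins L'" and d: "card (dset L') + 1 = j"
      by (auto simp: SB_def linked_cycles_def)
    show ?thesis using closB[OF lc i] l' dset_insB[OF lc] i d by (simp add: LCd_def linked_cycles_def insB_def)
  next
    assume "L \<in> fC m ` SC m j"
    then obtain L' p a where l': "(L', (p, a)) \<in> SC m j" "L = insC m L' p a" by (auto simp: fC_def)
    then have lc: "linked_cycle m L'" and p: "p \<in> L'" "a \<in> fst p" and d: "card (dset L') + 1 = j"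
      by (auto simp: SC_def linked_cycles_def)
    show ?thesis using closC[OF lc p] l' dset_insC[OF lc p(1)] d by (simp add: LCd_def linked_cycles_def insC_def)
  qed
qed

lemma LCd_rec:
  "card (LCd (Suc m) j) = card (LCd m j) + (m + j - 1) * card {L \<in> linked_cycles m. card (dset L) + 1 = j}"
proof -
  let ?A = "{L \<in> linked_cycles m. card (dset L) + 1 = j}"
  have fA: "finite ?A" using finite_lcs by simp
  have fLCd: "finite (LCd k j)" for k using finite_lcs[of k] by (simp add: LCd_def)
  have fSB: "finite (SB m j)" unfolding SB_def
    by (rule finite_SigmaI[OF fA]) (auto simp: linked_cycles_def lc_dset_fin)
  have fSC: "finite (SC m j)" unfolding SC_def
    by (rule finite_SigmaI[OF fA]) (auto simp: linked_cycles_def intro!: finite_SigmaI lc_finite lc_fin_block)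
  have iA: "inj_on (insA m) (LCd m j)"
  proof (rule inj_onI)
    fix x y assume "x \<in> LCd m j" "y \<in> LCd m j" "insA m x = insA m y"
    then show "x = y" using injA[of m x y] by (simp add: LCd_def linked_cycles_def)
  qed
  have iB: "inj_on (fB m) (SB m j)"
  proof (rule inj_onI)
    fix x y assume xy: "x \<in> SB m j" "y \<in> SB m j" "fB m x = fB m y"
    obtain L1 i1 where x: "x = (L1, i1)" by (cases x)
    obtain L2 i2 where y: "y = (L2, i2)" by (cases y)
    have h1: "linked_cycle m L1" "i1 \<in> dset L1" using xy(1) x by (auto simp: SB_def linked_cycles_def)
    have h2: "linked_cycle m L2" "i2 \<in> dset L2" using xy(2) y by (auto simp: SB_def linked_cycles_def)
    have h3: "insB m L1 i1 = insB m L2 i2" using xy(3) x y by (simp add: fB_def)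
    have "L1 = L2 \<and> i1 = i2" by (rule injB[OF h1(1) h2(1) h1(2) h2(2) h3])
    then show "x = y" using x y by simp
  qed
  have iC: "inj_on (fC m) (SC m j)"
  proof (rule inj_onI)
    fix x y assume xy: "x \<in> SC m j" "y \<in> SC m j" "fC m x = fC m y"
    obtain L1 p1 a1 where x: "x = (L1, (p1, a1))" by (cases x) auto
    obtain L2 p2 a2 where y: "y = (L2, (p2, a2))" by (cases y) auto
    have h1: "linked_cycle m L1" "p1 \<in> L1" "a1 \<in> fst p1" using xy(1) x by (auto simp: SC_def linked_cycles_def)
    have h2: "linked_cycle m L2" "p2 \<in> L2" "a2 \<in> fst p2" using xy(2) y by (auto simp: SC_def linked_cycles_def)
    have h3: "insC m L1 p1 a1 = insC m L2 p2 a2" using xy(3) x y by (simp add: fC_def)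
    have "L1 = L2 \<and> p1 = p2 \<and> a1 = a2" by (rule injC[OF h1(1) h2(1) h1(2,3) h2(2,3) h3])
    then show "x = y" using x y by simp
  qed
  have dAB: "insA m ` LCd m j \<inter> fB m ` SB m j = {}"
  proof -
    { fix L1 x assume "L1 \<in> LCd m j" "x \<in> SB m j" "insA m L1 = fB m x"
      then have False using disjAB[of m "fst x" "snd x" L1] by (auto simp: SB_def linked_cycles_def fB_def) }
    then show ?thesis by blast
  qed
  have dAC: "(insA m ` LCd m j \<union> fB m ` SB m j) \<inter> fC m ` SC m j = {}"
  proof -
    { fix L1 x assume "L1 \<in> LCd m j" "x \<in> SC m j" "insA m L1 = fC m x"
      then have False using disjAC[of m "fst x" "fst (snd x)" L1 "snd (snd x)"] by (auto simp: SC_def linked_cycles_def fC_def) }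
    moreover
    { fix y x assume "y \<in> SB m j" "x \<in> SC m j" "fB m y = fC m x"
      then have False using disjBC[of m "fst y" "snd y" "fst x" "fst (snd x)" "snd (snd x)"]
        by (auto simp: SB_def SC_def linked_cycles_def fB_def fC_def) }
    ultimately show ?thesis by blast
  qed
  have "card (LCd (Suc m) j) = card (insA m ` LCd m j) + card (fB m ` SB m j) + card (fC m ` SC m j)"
    unfolding LCd_decomp
    using card_Un_disjoint[OF _ _ dAC] card_Un_disjoint[OF _ _ dAB] fLCd fSB fSC by simp
  also have "\<dots> = card (LCd m j) + card (SB m j) + card (SC m j)"
    using card_image[OF iA] card_image[OF iB] card_image[OF iC] by simp
  finally have e1: "card (LCd (Suc m) j) = card (LCd m j) + (card (SB m j) + card (SC m j))" by simp
  have e2: "card (SB m j) + card (SC m j) = (\<Sum>L\<in>?A. card (dset L - mins L) + (\<Sum>p\<in>L. card (fst p)))"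
  proof -
    have "card (SB m j) = (\<Sum>L\<in>?A. card (dset L - mins L))" unfolding SB_def
      by (rule card_SigmaI[OF fA]) (auto simp: linked_cycles_def lc_dset_fin)
    moreover have "card (SC m j) = (\<Sum>L\<in>?A. (\<Sum>p\<in>L. card (fst p)))" unfolding SC_def
    proof (subst card_SigmaI[OF fA])
      show "\<forall>a\<in>?A. finite (Sigma a fst)"
        by (auto simp: linked_cycles_def intro!: finite_SigmaI lc_finite lc_fin_block)
      show "(\<Sum>a\<in>?A. card (Sigma a fst)) = (\<Sum>L\<in>?A. \<Sum>p\<in>L. card (fst p))"
        by (rule sum.cong[OF refl]) (auto simp: linked_cycles_def intro!: card_SigmaI lc_finite lc_fin_block)
    qed
    ultimately show ?thesis by (simp add: sum.distrib)
  qed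
  have e3: "(\<Sum>L\<in>?A. card (dset L - mins L) + (\<Sum>p\<in>L. card (fst p))) = (\<Sum>L\<in>?A. m + j - 1)"
    by (rule sum.cong[OF refl]) (auto simp: linked_cycles_def lc_count)
  show ?thesis using e1 e2 e3 by simp
qed

definition npairs :: "nat set set \<Rightarrow> nat" where
  "npairs P = card {B\<in>P. card B = 2}"

definition PS :: "nat set \<Rightarrow> nat \<Rightarrow> nat set set set" where
  "PS S j = {P. partition_on S P \<and> (\<forall>B\<in>P. card B \<le> 2) \<and> npairs P = j}"

fun g :: "nat \<Rightarrow> nat \<Rightarrow> nat" where
  "g 0 j = (if j = 0 then 1 else 0)"
| "g (Suc 0) j = (if j = 0 then 1 else 0)"
| "g (Suc (Suc s)) j = g (Suc s) j + (if j = 0 then 0 else Suc s * g s (j - 1))"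

lemma PS_finite: "finite S \<Longrightarrow> finite (PS S j)"
  by (rule finite_subset[OF _ finitely_many_partition_on[of S]]) (auto simp: PS_def)

lemma npairs_insert:
  assumes "finite Q" "p \<notin> Q"
  shows "npairs (insert p Q) = npairs Q + (if card p = 2 then 1 else 0)"
proof -
  have "{B\<in>insert p Q. card B = 2} = (if card p = 2 then insert p {B\<in>Q. card B = 2} else {B\<in>Q. card B = 2})"
    by auto
  then show ?thesis using assms by (simp add: npairs_def)
qed

lemma PS_insert:
  assumes "finite T" "Q \<in> PS T k" "p \<inter> T = {}" "p \<noteq> {}" "card p \<le> 2"
  shows "insert p Q \<in> PS (T \<union> p) (k + (if card p = 2 then 1 else 0))"
proof -
  have pt: "partition_on T Q" using assms(2) by (simp add: PS_def)
  have fQ: "finite Q" using finite_elements[OF assms(1) pt] .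
  have pQ: "p \<notin> Q"
  proof
    assume "p \<in> Q"
    then have "p \<subseteq> T" using partition_onD1[OF pt] by auto
    with assms(3,4) show False by auto
  qed
  have d: "disjnt p (\<Union>Q)" using assms(3) partition_onD1[OF pt] by (auto simp: disjnt_def)
  have e1: "T \<union> p - p = T" using assms(3) by auto
  have "partition_on (T \<union> p) (insert p Q)"
    using partition_on_insert[OF d, of "T \<union> p"] pt assms(4) e1 by simp
  then show ?thesis using assms npairs_insert[OF fQ pQ] by (auto simp: PS_def)
qed

lemma PS_remove:
  assumes "finite S" "P \<in> PS S k" "p \<in> P"
  shows "P - {p} \<in> PS (S - p) (k - (if card p = 2 then 1 else 0))"
    and "card p = 2 \<Longrightarrow> k \<ge> 1"
proof -
  have pt: "partition_on S P" using assms(2) by (simp add: PS_def)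
  have fP: "finite P" using finite_elements[OF assms(1) pt] .
  have e: "P = insert p (P - {p})" using assms(3) by auto
  have d: "disjnt p (\<Union>(P - {p}))"
    using partition_onD2[OF pt] assms(3) by (auto simp: disjnt_def disjoint_def)
  have "partition_on (S - p) (P - {p})"
    using partition_on_insert[OF d, of S] pt e by simp
  moreover have "npairs P = npairs (P - {p}) + (if card p = 2 then 1 else 0)"
    using npairs_insert[of "P - {p}" p] fP e by simp
  ultimately show "P - {p} \<in> PS (S - p) (k - (if card p = 2 then 1 else 0))"
    "card p = 2 \<Longrightarrow> k \<ge> 1" using assms(2) by (auto simp: PS_def)
qed

lemma small_block:
  assumes "finite B" "card B \<le> 2" "x \<in> B"
  shows "B = {x} \<or> (\<exists>y. y \<noteq> x \<and> B = {x, y})"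
proof -
  have "card (B - {x}) \<le> 1" using assms by auto
  then have "\<forall>a\<in>B-{x}. \<forall>b\<in>B-{x}. a = b" using card_le_Suc0_iff_eq[of "B - {x}"] assms(1) by auto
  then show ?thesis using assms(3) by blast
qed

lemma PS_decomp:
  assumes "finite S" "x \<in> S"
  shows "PS S j = insert {x} ` PS (S - {x}) j \<union>
     (\<Union>y\<in>S-{x}. if j = 0 then {} else insert {x,y} ` PS (S - {x,y}) (j - 1))"
proof (intro equalityI subsetI)
  fix P assume P: "P \<in> PS S j"
  then have pt: "partition_on S P" by (simp add: PS_def)
  obtain B where B: "B \<in> P" "x \<in> B" using partition_onD1[OF pt] assms(2) by auto
  have BS: "B \<subseteq> S" using B partition_onD1[OF pt] by auto
  have fB: "finite B" using BS assms(1) by (rule finite_subset)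
  have cB: "card B \<le> 2" using P B by (auto simp: PS_def)
  show "P \<in> insert {x} ` PS (S - {x}) j \<union>
     (\<Union>y\<in>S-{x}. if j = 0 then {} else insert {x,y} ` PS (S - {x,y}) (j - 1))"
  proof (cases "B = {x}")
    case True
    then have "P - {B} \<in> PS (S - {x}) j" using PS_remove(1)[OF assms(1) P B(1)] by simp
    moreover have "P = insert {x} (P - {B})" using True B by auto
    ultimately have "P \<in> insert {x} ` PS (S - {x}) j" by (rule rev_image_eqI)
    then show ?thesis by (rule UnI1)
  next
    case False
    then obtain y where y: "y \<noteq> x" "B = {x,y}" using small_block[OF fB cB B(2)] by blast
    have c2: "card B = 2" using y by auto
    have "P - {B} \<in> PS (S - {x,y}) (j - 1)" using PS_remove(1)[OF assms(1) P B(1)] c2 y by simp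
    moreover have "j \<noteq> 0" using PS_remove(2)[OF assms(1) P B(1)] c2 by simp
    moreover have "P = insert {x,y} (P - {B})" using y B by auto
    moreover have "y \<in> S - {x}" using BS y by auto
    ultimately have "P \<in> (if j = 0 then {} else insert {x,y} ` PS (S - {x,y}) (j - 1))"
      by simp
    then show ?thesis using \<open>y \<in> S - {x}\<close> by (intro UnI2 UN_I)
  qed
next
  fix P assume "P \<in> insert {x} ` PS (S - {x}) j \<union>
     (\<Union>y\<in>S-{x}. if j = 0 then {} else insert {x,y} ` PS (S - {x,y}) (j - 1))"
  then show "P \<in> PS S j"
  proof (elim UnE)
    assume "P \<in> insert {x} ` PS (S - {x}) j"
    then obtain Q where Q: "Q \<in> PS (S - {x}) j" "P = insert {x} Q" by blast
    have "insert {x} Q \<in> PS (S - {x} \<union> {x}) (j + 0)"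
      using PS_insert[OF _ Q(1), of "{x}"] assms by simp
    then show ?thesis using Q assms by (simp add: insert_absorb)
  next
    assume "P \<in> (\<Union>y\<in>S-{x}. if j = 0 then {} else insert {x,y} ` PS (S - {x,y}) (j - 1))"
    then obtain y Q where y: "y \<in> S - {x}" "j \<noteq> 0" and Q: "Q \<in> PS (S - {x,y}) (j - 1)" "P = insert {x,y} Q"
      by (auto split: if_splits)
    have "insert {x,y} Q \<in> PS (S - {x,y} \<union> {x,y}) (j - 1 + 1)"
      using PS_insert[OF _ Q(1), of "{x,y}"] assms y by simp
    moreover have "S - {x,y} \<union> {x,y} = S" using y assms by auto
    ultimately show ?thesis using Q y by simp
  qed
qed

lemma PS_card_rec:
  assumes "finite S" "x \<in> S"
  shows "card (PS S j) = card (PS (S - {x}) j) + (if j = 0 then 0 else (\<Sum>y\<in>S-{x}. card (PS (S - {x,y}) (j - 1))))"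
proof -
  let ?A = "insert {x} ` PS (S - {x}) j"
  let ?B = "\<lambda>y. if j = 0 then {} else insert {x,y} ` PS (S - {x,y}) (j - 1)"
  have nin: "p \<notin> Q" if "Q \<in> PS T k" "p \<noteq> {}" "p \<inter> T = {}" for Q T k p
    using that by (auto simp: PS_def partition_on_def)
  have cA: "card ?A = card (PS (S - {x}) j)"
  proof (rule card_image, rule inj_onI)
    fix Q1 Q2 assume "Q1 \<in> PS (S - {x}) j" "Q2 \<in> PS (S - {x}) j" "insert {x} Q1 = insert {x} Q2"
    moreover have "{x} \<notin> Q1" "{x} \<notin> Q2" using nin calculation(1,2) by auto
    ultimately show "Q1 = Q2" by (simp add: insert_ident)
  qed
  have cB: "card (?B y) = (if j = 0 then 0 else card (PS (S - {x,y}) (j - 1)))" if "y \<in> S - {x}" for y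
  proof (cases "j = 0")
    case False
    have "card (insert {x,y} ` PS (S - {x,y}) (j - 1)) = card (PS (S - {x,y}) (j - 1))"
    proof (rule card_image, rule inj_onI)
      fix Q1 Q2 assume "Q1 \<in> PS (S - {x,y}) (j-1)" "Q2 \<in> PS (S - {x,y}) (j-1)" "insert {x,y} Q1 = insert {x,y} Q2"
      moreover have "{x,y} \<notin> Q1" "{x,y} \<notin> Q2" using nin calculation(1,2) by auto
      ultimately show "Q1 = Q2" by (simp add: insert_ident)
    qed
    then show ?thesis using False by simp
  qed simp
  have fin: "finite (?B y)" for y using PS_finite assms(1) by auto
  have disjB: "?B y1 \<inter> ?B y2 = {}" if "y1 \<in> S - {x}" "y2 \<in> S - {x}" "y1 \<noteq> y2" for y1 y2
  proof -
    { fix P assume "P \<in> ?B y1" "P \<in> ?B y2"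
      then obtain Q1 Q2 where Q: "Q1 \<in> PS (S - {x,y1}) (j - 1)" "P = insert {x,y1} Q1"
        "Q2 \<in> PS (S - {x,y2}) (j - 1)" "P = insert {x,y2} Q2" by (auto split: if_splits)
      have "{x,y2} \<in> Q1" using Q that by auto
      then have "{x,y2} \<subseteq> S - {x,y1}" using Q(1) by (auto simp: PS_def partition_on_def)
      then have False by auto }
    then show ?thesis by blast
  qed
  have disjAB: "?A \<inter> (\<Union>y\<in>S-{x}. ?B y) = {}"
  proof -
    { fix P y assume "P \<in> ?A" "y \<in> S - {x}" "P \<in> ?B y"
      then obtain Q1 Q2 where Q: "Q1 \<in> PS (S - {x}) j" "P = insert {x} Q1"
        "Q2 \<in> PS (S - {x,y}) (j - 1)" "P = insert {x,y} Q2" by (auto split: if_splits)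
      have "{x,y} \<in> P" using Q(4) by simp
      moreover have "{x,y} \<noteq> {x}" using \<open>y \<in> S - {x}\<close> by auto
      ultimately have "{x,y} \<in> Q1" using Q(2) by simp
      then have "{x,y} \<subseteq> S - {x}" using Q(1) by (auto simp: PS_def partition_on_def)
      then have False by auto }
    then show ?thesis by blast
  qed
  have "card (PS S j) = card ?A + card (\<Union>y\<in>S-{x}. ?B y)"
    using PS_decomp[OF assms] card_Un_disjoint[OF _ _ disjAB] PS_finite assms fin by auto
  also have "card (\<Union>y\<in>S-{x}. ?B y) = (\<Sum>y\<in>S-{x}. card (?B y))"
    using card_UN_disjoint[of "S - {x}" ?B] assms fin disjB by auto
  also have "\<dots> = (\<Sum>y\<in>S-{x}. (if j = 0 then 0 else card (PS (S - {x,y}) (j - 1))))"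
    using cB by (rule sum.cong[OF refl])
  finally show ?thesis using cA by simp
qed

lemma PS_card: "finite S \<Longrightarrow> card (PS S j) = g (card S) j"
proof (induction "card S" arbitrary: S j rule: less_induct)
  case less
  show ?case
  proof (cases "S = {}")
    case True
    have "PS {} j = (if j = 0 then {{}} else {})" by (auto simp: PS_def partition_on_empty npairs_def)
    then show ?thesis using True by simp
  next
    case False
    then obtain x where x: "x \<in> S" by blast
    have rec: "card (PS S j) = card (PS (S - {x}) j) + (if j = 0 then 0 else (\<Sum>y\<in>S-{x}. card (PS (S - {x,y}) (j - 1))))"
      using PS_card_rec[OF less(2) x] .
    have lt: "card (S - {x}) < card S" using x less(2) by (intro psubset_card_mono) auto
    have c1: "card (PS (S - {x}) j) = g (card S - 1) j"
      using less(1)[OF lt] less(2) x by (simp add: card_Diff_singleton)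
    show ?thesis
    proof (cases "card S")
      case 0 then show ?thesis using False less(2) by simp
    next
      case (Suc s)
      show ?thesis
      proof (cases s)
        case 0
        then obtain z where "S = {z}" using Suc by (auto simp: card_Suc_eq)
        then have e: "S - {x} = {}" using x by auto
        show ?thesis using rec c1 Suc 0 unfolding e by simp
      next
        case (Suc t)
        have "(\<Sum>y\<in>S-{x}. card (PS (S - {x,y}) (j - 1))) = (\<Sum>y\<in>S-{x}. g t (j - 1))"
        proof (rule sum.cong[OF refl])
          fix y assume y: "y \<in> S - {x}"
          have "card (S - {x,y}) = t" using y x \<open>card S = Suc s\<close> Suc less(2)
            by (simp add: card_Diff_subset)
          moreover have "card (S - {x,y}) < card S" using y x less(2) by (intro psubset_card_mono) auto
          ultimately show "card (PS (S - {x,y}) (j - 1)) = g t (j - 1)" using less(1) less(2) by auto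
        qed
        moreover have "card (S - {x}) = Suc t" using x \<open>card S = Suc s\<close> Suc by simp
        ultimately show ?thesis using rec c1 \<open>card S = Suc s\<close> Suc by simp
      qed
    qed
  qed
qed


lemma g_0: "j = 0 \<longrightarrow> g s j = 1"
  by (induction s j rule: g.induct) auto

lemma g_zero: "s < 2 * j \<longrightarrow> g s j = 0"
  by (induction s j rule: g.induct) auto

lemma g_diag: "g j j = (if j = 0 then 1 else 0)"
  using g_0[of j j] g_zero[of j j] by auto

lemma lcs_0: "linked_cycles 0 = {{}}"
proof -
  have "linked_cycle 0 L \<longleftrightarrow> L = {}" for L
  proof
    assume "linked_cycle 0 L"
    then show "L = {}" using lc_ne lc_sub by fastforce
  qed (simp add: lc_iff)
  then show ?thesis by (auto simp: linked_cycles_def)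
qed

lemma card_LCd_Suc: "card (LCd (Suc m) j) = g (m + j) j"
proof (induction m arbitrary: j)
  case 0
  have "card (LCd (Suc 0) j) = card (LCd 0 j) + (0 + j - 1) * card {L \<in> linked_cycles 0. card (dset L) + 1 = j}"
    by (rule LCd_rec)
  also have "LCd 0 j = (if j = 0 then {{}} else {})" by (auto simp: LCd_def lcs_0 dset_def)
  also have "{L \<in> linked_cycles 0. card (dset L) + 1 = j} = (if j = 1 then {{}} else {})"
    by (auto simp: lcs_0 dset_def)
  finally show ?case using g_diag[of j] by simp
next
  case (Suc m)
  have e: "{L \<in> linked_cycles (Suc m). card (dset L) + 1 = j} = (if j = 0 then {} else LCd (Suc m) (j - 1))"
    by (auto simp: LCd_def)
  have "card (LCd (Suc (Suc m)) j) = card (LCd (Suc m) j) + (Suc m + j - 1) * card {L \<in> linked_cycles (Suc m). card (dset L) + 1 = j}"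
    by (rule LCd_rec)
  also have "\<dots> = g (m + j) j + (m + j) * (if j = 0 then 0 else g (m + j - 1) (j - 1))"
    unfolding e using Suc.IH by simp
  also have "\<dots> = g (Suc m + j) j"
  proof (cases j)
    case 0 then show ?thesis using g_0 by simp
  next
    case (Suc j')
    then show ?thesis by simp
  qed
  finally show ?case .
qed

lemma dset_bound:
  assumes lc: "linked_cycle (Suc n) L"
  shows "card (dset L) \<le> n"
proof -
  have "dset L \<subseteq> {2..Suc n}"
  proof
    fix x assume "x \<in> dset L"
    then obtain p where p: "p \<in> L" "x \<in> fst p" "x \<noteq> Min (fst p)" unfolding dset_def nonmin_def by blast
    have x1: "x \<in> {1..Suc n}" using lc_sub[OF lc p(1)] p(2) by blast
    have "Min (fst p) \<in> {1..Suc n}" using lc_sub[OF lc p(1)] Min_in[OF lc_fin_block[OF lc p(1)] lc_ne[OF lc p(1)]] by blast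
    moreover have "Min (fst p) \<le> x" using Min_le[OF lc_fin_block[OF lc p(1)] p(2)] .
    ultimately have "x \<noteq> 1" using p(3) by auto
    then show "x \<in> {2..Suc n}" using x1 by auto
  qed
  then have "card (dset L) \<le> card {2..Suc n}" by (rule card_mono[rotated]) simp
  then show ?thesis by simp
qed

lemma card_lcs: "card (linked_cycles (Suc n)) = (\<Sum>j\<le>n. g (n + j) j)"
proof -
  have "linked_cycles (Suc n) = (\<Union>j\<in>{..n}. LCd (Suc n) j)"
    using dset_bound by (auto simp: LCd_def linked_cycles_def)
  moreover have "card (\<Union>j\<in>{..n}. LCd (Suc n) j) = (\<Sum>j\<le>n. card (LCd (Suc n) j))"
    by (rule card_UN_disjoint) (auto simp: LCd_def intro: finite_subset[OF _ finite_lcs])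
  ultimately show ?thesis using card_LCd_Suc by simp
qed

lemma card_blocks:
  assumes "finite S" "partition_on S P" "\<forall>B\<in>P. card B \<le> 2"
  shows "card S = card P + npairs P"
proof -
  have fb: "\<And>B. B \<in> P \<Longrightarrow> finite B" using assms(1,2) partition_onD1[OF assms(2)]
    by (metis Union_upper finite_subset)
  have fP: "finite P" using finite_elements[OF assms(1,2)] .
  have "card S = (\<Sum>B\<in>P. card B)" using product_partition[OF assms(2) fb] .
  also have "\<dots> = (\<Sum>B\<in>P. 1 + (if card B = 2 then 1 else 0))"
  proof (rule sum.cong[OF refl])
    fix B assume B: "B \<in> P"
    have "B \<noteq> {}" using partition_onD3[OF assms(2)] B by blast
    then have "card B \<ge> 1" using fb[OF B] by (simp add: Suc_le_eq card_gt_0_iff)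
    then show "card B = 1 + (if card B = 2 then 1 else 0)" using assms(3) B by auto
  qed
  also have "\<dots> = card P + (\<Sum>B\<in>P. if card B = 2 then 1 else 0)" by (simp only: sum.distrib) simp
  also have "(\<Sum>B\<in>P. if card B = 2 then 1 else 0) = npairs P"
    unfolding npairs_def using sum.inter_filter[OF fP, of "\<lambda>_. (1::nat)" "\<lambda>B. card B = 2"] by simp
  finally show ?thesis .
qed

lemma P2_decomp: "P2 n = (\<Union>j\<in>{..n}. PS {1..n+j} j)"
proof (intro equalityI subsetI)
  fix P assume "P \<in> P2 n"
  then obtain k where k: "k \<le> 2 * n" "partition_on {1..k} P" "card P = n" "\<forall>B\<in>P. card B \<le> 2"
    unfolding P2_def by blast
  have "k = n + npairs P" using card_blocks[OF _ k(2) k(4)] k(3) by simp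
  then show "P \<in> (\<Union>j\<in>{..n}. PS {1..n+j} j)" using k by (auto simp: PS_def)
next
  fix P assume "P \<in> (\<Union>j\<in>{..n}. PS {1..n+j} j)"
  then obtain j where j: "j \<le> n" "P \<in> PS {1..n+j} j" by blast
  then have h: "partition_on {1..n+j} P" "\<forall>B\<in>P. card B \<le> 2" "npairs P = j" by (auto simp: PS_def)
  have "n + j = card P + j" using card_blocks[OF _ h(1) h(2)] h(3) by simp
  then have "card P = n" by simp
  moreover have "n + j \<le> 2 * n" using j(1) by simp
  ultimately show "P \<in> P2 n" unfolding P2_def using h by blast
qed

lemma card_P2: "card (P2 n) = (\<Sum>j\<le>n. g (n + j) j)"
proof -
  have "card (\<Union>j\<in>{..n}. PS {1..n+j} j) = (\<Sum>j\<le>n. card (PS {1..n+j} j))"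
  proof (rule card_UN_disjoint)
    show "\<forall>j\<in>{..n}. finite (PS {1..n+j} j)" using PS_finite by simp
    show "\<forall>i\<in>{..n}. \<forall>j\<in>{..n}. i \<noteq> j \<longrightarrow> PS {1..n+i} i \<inter> PS {1..n+j} j = {}"
      by (auto simp: PS_def)
  qed simp
  then show ?thesis using P2_decomp PS_card by simp
qed

theorem mainTheorem12:
  fixes n :: nat
  shows "\<exists>f. bij_betw f (linked_cycles (n + 1)) (P2 n)"
proof -
  have "finite (P2 n)" using P2_decomp PS_finite by simp
  moreover have "card (linked_cycles (n + 1)) = card (P2 n)" using card_lcs card_P2 by simp
  ultimately show ?thesis using finite_same_card_bij finite_lcs by blast
qed

end
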